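(* If $A\in\{0,1\}^{n\times m}$ is a binary matrix, then its Boolean (Schein/Barvinok) rank equals its subtropical (Schein/Barvinok) rank.
   Context: $\mathbb{R}_+=[0,\infty)$. The max-times product of $B\in\mathbb{R}_+^{n\times k}$, $C\in\mathbb{R}_+^{k\times m}$ is $(B\boxtimes C)_{ij}=\max_{s=1}^{k} B_{is}C_{sj}$; the subtropical rank of $A\in\mathbb{R}_+^{n\times m}$ is the least $k$ such that $A=B\boxtimes C$ for some $B\in\mathbb{R}_+^{n\times k}$, $C\in\mathbb{R}_+^{k\times m}$. The Boolean product of binary matrices $B\in\{0,1\}^{n\times k}$, $C\in\{0,1\}^{k\times m}$ is $(B\circ C)_{ij}=\bigvee_{l=1}^k B_{il}C_{lj}$; the Boolean rank of a binary matrix $A$ is the least $k$ such that $A=B\circ C$ for some binary $B\in\{0,1\}^{n\times k}$, $C\in\{0,1\}^{k\times m}$. *)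

theory Defs
  imports Complex_Main
begin

(* Matrices of size n x m are represented as functions nat => nat => 'a,
   only entries with i < n, j < m are relevant. *)

definition maxtimes_prod :: "nat \<Rightarrow> (nat \<Rightarrow> nat \<Rightarrow> real) \<Rightarrow> (nat \<Rightarrow> nat \<Rightarrow> real) \<Rightarrow> nat \<Rightarrow> nat \<Rightarrow> real" where
  "maxtimes_prod k B C i j = (if k = 0 then 0 else Max ((\<lambda>s. B i s * C s j) ` {..<k}))"

definition bool_prod :: "nat \<Rightarrow> (nat \<Rightarrow> nat \<Rightarrow> bool) \<Rightarrow> (nat \<Rightarrow> nat \<Rightarrow> bool) \<Rightarrow> nat \<Rightarrow> nat \<Rightarrow> bool" where
  "bool_prod k B C i j = (\<exists>l<k. B i l \<and> C l j)"

definition subtropical_rank :: "nat \<Rightarrow> nat \<Rightarrow> (nat \<Rightarrow> nat \<Rightarrow> real) \<Rightarrow> nat" where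
  "subtropical_rank n m A = (LEAST k. \<exists>B C.
      (\<forall>i<n. \<forall>s<k. B i s \<ge> 0) \<and> (\<forall>s<k. \<forall>j<m. C s j \<ge> 0) \<and>
      (\<forall>i<n. \<forall>j<m. A i j = maxtimes_prod k B C i j))"

definition boolean_rank :: "nat \<Rightarrow> nat \<Rightarrow> (nat \<Rightarrow> nat \<Rightarrow> bool) \<Rightarrow> nat" where
  "boolean_rank n m A = (LEAST k. \<exists>B C. \<forall>i<n. \<forall>j<m. A i j = bool_prod k B C i j)"

end

theory Submission
  imports Defs
begin

lemma mt_pos:
  assumes "\<forall>s<k. B i s \<ge> 0" "\<forall>s<k. C s j \<ge> (0::real)"
  shows "maxtimes_prod k B C i j > 0 \<longleftrightarrow> (\<exists>s<k. B i s > 0 \<and> C s j > 0)"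
proof (cases "k = 0")
  case True then show ?thesis by (simp add: maxtimes_prod_def)
next
  case False
  have "maxtimes_prod k B C i j > 0 \<longleftrightarrow> (\<exists>s<k. B i s * C s j > 0)"
  proof -
    have "0 < Max ((\<lambda>s. B i s * C s j) ` {..<k}) \<longleftrightarrow> (\<exists>a\<in>(\<lambda>s. B i s * C s j) ` {..<k}. 0 < a)"
      using False by (intro Max_gr_iff) auto
    then show ?thesis using False by (auto simp: maxtimes_prod_def)
  qed
  also have "\<dots> \<longleftrightarrow> (\<exists>s<k. B i s > 0 \<and> C s j > 0)"
    using assms by (metis less_eq_real_def mult_pos_pos mult_eq_0_iff)
  finally show ?thesis .
qed

lemma mt_01:
  assumes "\<forall>s<k. B i s \<in> {0,1}" "\<forall>s<k. C s j \<in> {0,(1::real)}"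
  shows "maxtimes_prod k B C i j \<in> {0,1}"
proof (cases "k = 0")
  case True then show ?thesis by (simp add: maxtimes_prod_def)
next
  case False
  have "Max ((\<lambda>s. B i s * C s j) ` {..<k}) \<in> (\<lambda>s. B i s * C s j) ` {..<k}"
    using False by (intro Max_in) auto
  then obtain s where "s < k" "maxtimes_prod k B C i j = B i s * C s j"
    using False by (auto simp: maxtimes_prod_def)
  moreover have "B i s \<in> {0,1}" "C s j \<in> {0,1}" using assms \<open>s < k\<close> by auto
  ultimately show ?thesis by auto
qed

lemma key:
  assumes A: "\<forall>i<n. \<forall>j<m. A i j \<in> {0, 1}"
  shows "(\<exists>B C. \<forall>i<n. \<forall>j<m. (A i j = 1) = bool_prod k B C i j) \<longleftrightarrow>
    (\<exists>B C. (\<forall>i<n. \<forall>s<k. B i s \<ge> 0) \<and> (\<forall>s<k. \<forall>j<m. C s j \<ge> 0) \<and>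
      (\<forall>i<n. \<forall>j<m. A i j = maxtimes_prod k B C i j))"
proof
  assume "\<exists>B C. \<forall>i<n. \<forall>j<m. (A i j = 1) = bool_prod k B C i j"
  then obtain B C where h: "\<forall>i<n. \<forall>j<m. (A i j = 1) = bool_prod k B C i j" by blast
  define B' where "B' i s = (if B i s then 1 else (0::real))" for i s
  define C' where "C' s j = (if C s j then 1 else (0::real))" for s j
  have "\<forall>i<n. \<forall>j<m. A i j = maxtimes_prod k B' C' i j"
  proof (intro allI impI)
    fix i j assume ij: "i < n" "j < m"
    have p: "maxtimes_prod k B' C' i j > 0 \<longleftrightarrow> bool_prod k B C i j"
      by (subst mt_pos) (auto simp: B'_def C'_def bool_prod_def)
    have "maxtimes_prod k B' C' i j \<in> {0,1}"
      by (rule mt_01) (auto simp: B'_def C'_def)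
    then show "A i j = maxtimes_prod k B' C' i j"
      using p h ij A by fastforce
  qed
  then show "\<exists>B C. (\<forall>i<n. \<forall>s<k. B i s \<ge> 0) \<and> (\<forall>s<k. \<forall>j<m. C s j \<ge> 0) \<and>
      (\<forall>i<n. \<forall>j<m. A i j = maxtimes_prod k B C i j)"
    by (intro exI[of _ B'] exI[of _ C']) (auto simp: B'_def C'_def)
next
  assume "\<exists>B C. (\<forall>i<n. \<forall>s<k. B i s \<ge> 0) \<and> (\<forall>s<k. \<forall>j<m. C s j \<ge> 0) \<and>
      (\<forall>i<n. \<forall>j<m. A i j = maxtimes_prod k B C i j)"
  then obtain B C where hB: "\<forall>i<n. \<forall>s<k. B i s \<ge> (0::real)" and hC: "\<forall>s<k. \<forall>j<m. C s j \<ge> 0"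
    and h: "\<forall>i<n. \<forall>j<m. A i j = maxtimes_prod k B C i j" by blast
  have "\<forall>i<n. \<forall>j<m. (A i j = 1) = bool_prod k (\<lambda>i s. B i s > 0) (\<lambda>s j. C s j > 0) i j"
  proof (intro allI impI)
    fix i j assume ij: "i < n" "j < m"
    have p: "maxtimes_prod k B C i j > 0 \<longleftrightarrow> (\<exists>s<k. B i s > 0 \<and> C s j > 0)"
      using hB hC ij by (intro mt_pos) auto
    show "(A i j = 1) = bool_prod k (\<lambda>i s. B i s > 0) (\<lambda>s j. C s j > 0) i j"
      using p h ij A unfolding bool_prod_def by fastforce
  qed
  then show "\<exists>B C. \<forall>i<n. \<forall>j<m. (A i j = 1) = bool_prod k B C i j" by blast
qed

theorem lemma1:
  fixes n m :: nat and A :: "nat \<Rightarrow> nat \<Rightarrow> real"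
  assumes "\<forall>i<n. \<forall>j<m. A i j \<in> {0, 1}"
  shows "boolean_rank n m (\<lambda>i j. A i j = 1) = subtropical_rank n m A"
  unfolding boolean_rank_def subtropical_rank_def
  using key[OF assms] by presburger

end
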